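(* Let $r>0$, $\sigma>0$, $\mu\in\mathbb{R}$. For Lipschitz $h:\mathbb{R}\to\mathbb{R}$ let $f_h$ be the solution of the $\mathrm{SVG}(r,\sigma,\mu)$ Stein equation. There is no constant $M_{r,\sigma}>0$ such that $\|f_h^{(3)}\|\le M_{r,\sigma}\|h'\|$ for all Lipschitz $h:\mathbb{R}\to\mathbb{R}$.
   Context: $\mathrm{SVG}(r,\sigma,\mu)$ is the distribution with density $p(x)=\frac{1}{\sigma\sqrt{\pi}\Gamma(r/2)}\big(\frac{|x-\mu|}{2\sigma}\big)^{\frac{r-1}{2}}K_{\frac{r-1}{2}}\big(\frac{|x-\mu|}{\sigma}\big)$, with $I_\nu,K_\nu$ the modified Bessel functions of the first and second kind. For $Z\sim\mathrm{SVG}(r,\sigma,\mu)$, $\tilde h=h-\mathbb{E}h(Z)$; the Stein equation is $\sigma^2(x-\mu)f''(x)+\sigma^2rf'(x)-(x-\mu)f(x)=\tilde h(x)$, with solution (writing $y=x-\mu$, $\nu=\frac{r-1}2$) $$f_h(x)=-\frac{K_\nu(|y|/\sigma)}{\sigma^2|y|^\nu}\int_0^y|t|^\nu I_\nu(|t|/\sigma)\tilde h(t+\mu)\,dt-\frac{I_\nu(|y|/\sigma)}{\sigma^2|y|^\nu}\int_y^\infty|t|^\nu K_\nu(|t|/\sigma)\tilde h(t+\mu)\,dt.$$ $\|\cdot\|$ is the sup norm (taken over points where the derivative exists); $\|h'\|$ is the Lipschitz constant of $h$. *)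

theory Defs
  imports "HOL-Analysis.Analysis"
begin

definition besselI :: "real \<Rightarrow> real \<Rightarrow> real" where
  "besselI \<nu> x = (\<Sum>k. (x / 2) powr (2 * real k + \<nu>) / (fact k * Gamma (real k + \<nu> + 1)))"

definition besselK :: "real \<Rightarrow> real \<Rightarrow> real" where
  "besselK \<nu> x = (LBINT t=0..\<infinity>. exp (- x * cosh t) * cosh (\<nu> * t))"

definition svg_density :: "real \<Rightarrow> real \<Rightarrow> real \<Rightarrow> real \<Rightarrow> real" where
  "svg_density r \<sigma> \<mu> x =
     1 / (\<sigma> * sqrt pi * Gamma (r / 2)) * (\<bar>x - \<mu>\<bar> / (2 * \<sigma>)) powr ((r - 1) / 2)
       * besselK ((r - 1) / 2) (\<bar>x - \<mu>\<bar> / \<sigma>)"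

definition svg_expect :: "real \<Rightarrow> real \<Rightarrow> real \<Rightarrow> (real \<Rightarrow> real) \<Rightarrow> real" where
  "svg_expect r \<sigma> \<mu> h = (LINT x|lborel. h x * svg_density r \<sigma> \<mu> x)"

text \<open>The explicit formula for the solution, valid for y = x - mu \<noteq> 0.\<close>
definition svg_stein_formula :: "real \<Rightarrow> real \<Rightarrow> real \<Rightarrow> (real \<Rightarrow> real) \<Rightarrow> real \<Rightarrow> real" where
  "svg_stein_formula r \<sigma> \<mu> h x =
     (let \<nu> = (r - 1) / 2; y = x - \<mu>; ht = (\<lambda>u. h u - svg_expect r \<sigma> \<mu> h) in
       - besselK \<nu> (\<bar>y\<bar> / \<sigma>) / (\<sigma>\<^sup>2 * \<bar>y\<bar> powr \<nu>)
           * (LBINT t=0..ereal y. \<bar>t\<bar> powr \<nu> * besselI \<nu> (\<bar>t\<bar> / \<sigma>) * ht (t + \<mu>))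
       - besselI \<nu> (\<bar>y\<bar> / \<sigma>) / (\<sigma>\<^sup>2 * \<bar>y\<bar> powr \<nu>)
           * (LBINT t=ereal y..\<infinity>. \<bar>t\<bar> powr \<nu> * besselK \<nu> (\<bar>t\<bar> / \<sigma>) * ht (t + \<mu>)))"

definition svg_stein_sol :: "real \<Rightarrow> real \<Rightarrow> real \<Rightarrow> (real \<Rightarrow> real) \<Rightarrow> real \<Rightarrow> real" where
  "svg_stein_sol r \<sigma> \<mu> h x =
     (if x = \<mu> then Lim (at \<mu>) (svg_stein_formula r \<sigma> \<mu> h) else svg_stein_formula r \<sigma> \<mu> h x)"

definition third_deriv_at :: "(real \<Rightarrow> real) \<Rightarrow> real \<Rightarrow> real \<Rightarrow> bool" where
  "third_deriv_at f x D \<longleftrightarrow>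
     (\<exists>e>0. \<forall>y\<in>ball x e. f differentiable (at y) \<and> deriv f differentiable (at y))
     \<and> (deriv (deriv f) has_real_derivative D) (at x)"

text \<open>Lipschitz constant \<parallel>h'\<parallel>.\<close>
definition lip_const :: "(real \<Rightarrow> real) \<Rightarrow> real" where
  "lip_const h = Inf {L. L-lipschitz_on UNIV h}"

end

theory Submission
  imports Defs "HOL-Real_Asymp.Real_Asymp"
begin

lemma jump_lemma:
  fixes F u v A B w H u1 u2 u3 v1 v2 v3 w1 :: "real \<Rightarrow> real"
  assumes rho: "\<rho> > 0"
  and FJ: "\<And>x. x \<in> ball x0 \<rho> \<Longrightarrow> F x = - u x * A x - v x * B x"
  and du: "\<And>x. x \<in> ball x0 \<rho> \<Longrightarrow> (u has_real_derivative u1 x) (at x)"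
  and du1: "\<And>x. x \<in> ball x0 \<rho> \<Longrightarrow> (u1 has_real_derivative u2 x) (at x)"
  and du2: "\<And>x. x \<in> ball x0 \<rho> \<Longrightarrow> (u2 has_real_derivative u3 x) (at x)"
  and dv: "\<And>x. x \<in> ball x0 \<rho> \<Longrightarrow> (v has_real_derivative v1 x) (at x)"
  and dv1: "\<And>x. x \<in> ball x0 \<rho> \<Longrightarrow> (v1 has_real_derivative v2 x) (at x)"
  and dv2: "\<And>x. x \<in> ball x0 \<rho> \<Longrightarrow> (v2 has_real_derivative v3 x) (at x)"
  and dw: "\<And>x. x \<in> ball x0 \<rho> \<Longrightarrow> (w has_real_derivative w1 x) (at x)"
  and dA: "\<And>x. x \<in> ball x0 \<rho> \<Longrightarrow> (A has_real_derivative w x * v x * H x) (at x)"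
  and dB: "\<And>x. x \<in> ball x0 \<rho> \<Longrightarrow> (B has_real_derivative - (w x * u x * H x)) (at x)"
  and H: "\<And>x. x \<in> ball x0 \<rho> \<Longrightarrow> H x = c - \<bar>x - x0\<bar>"
  and g: "w x0 * (v1 x0 * u x0 - u1 x0 * v x0) > N"
  shows "\<exists>x D. third_deriv_at F x D \<and> \<bar>D\<bar> > N"
proof (rule ccontr)
  assume neg: "\<not> (\<exists>x D. third_deriv_at F x D \<and> \<bar>D\<bar> > N)"
  define J where "J = ball x0 \<rho>"
  have oJ: "open J" by (simp add: J_def)
  define F1 where "F1 x = - u1 x * A x - v1 x * B x" for x
  define g where "g x = w x * (v1 x * u x - u1 x * v x)" for x
  define F2 where "F2 x = - u2 x * A x - v2 x * B x + g x * H x" for x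
  define g1 where "g1 x = w1 x * (v1 x * u x - u1 x * v x) + w x * (v2 x * u x - u2 x * v x)" for x
  define F3 where "F3 x = - u3 x * A x - u2 x * (w x * v x * H x) - v3 x * B x
       + v2 x * (w x * u x * H x) + g1 x * H x + g x * (- sgn (x - x0))" for x
  have dF: "(F has_real_derivative F1 x) (at x)" if "x \<in> J" for x
  proof -
    have "((\<lambda>x. - u x * A x - v x * B x) has_real_derivative F1 x) (at x)"
      using du[of x] dA[of x] dv[of x] dB[of x] that unfolding J_def F1_def
      by (auto intro!: derivative_eq_intros simp: algebra_simps)
    then show ?thesis
      by (rule has_field_derivative_transform_within_open[OF _ oJ that]) (use FJ J_def in auto)
  qed
  have dF1: "(F1 has_real_derivative F2 x) (at x)" if "x \<in> J" for x
    unfolding F1_def[abs_def]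
    using du1[of x] dA[of x] dv1[of x] dB[of x] that unfolding J_def F2_def g_def
    by (auto intro!: derivative_eq_intros simp: algebra_simps)
  have dH: "(H has_real_derivative - sgn (x - x0)) (at x)" if "x \<in> J" "x \<noteq> x0" for x
  proof (cases "x < x0")
    case True
    have "((\<lambda>x. c + (x - x0)) has_real_derivative - sgn (x - x0)) (at x)"
      using True by (auto intro!: derivative_eq_intros)
    then show ?thesis
      by (rule has_field_derivative_transform_within_open[where S="J \<inter> {..<x0}"])
         (use that True H J_def in auto)
  next
    case False
    then have F: "x > x0" using that by auto
    have "((\<lambda>x. c - (x - x0)) has_real_derivative - sgn (x - x0)) (at x)"
      using F by (auto intro!: derivative_eq_intros)
    then show ?thesis
      by (rule has_field_derivative_transform_within_open[where S="J \<inter> {x0<..}"])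
         (use that F H J_def in auto)
  qed
  have dg: "(g has_real_derivative g1 x) (at x)" if "x \<in> J" for x
    unfolding g_def[abs_def]
    using dw[of x] du[of x] du1[of x] dv[of x] dv1[of x] that unfolding J_def g1_def
    by (auto intro!: derivative_eq_intros simp: algebra_simps)
  have dF2: "(F2 has_real_derivative F3 x) (at x)" if "x \<in> J" "x \<noteq> x0" for x
    unfolding F2_def[abs_def]
    using du2[of x] dA[of x] dv2[of x] dB[of x] dg[of x] dH[of x] that unfolding J_def F3_def
    by (auto intro!: derivative_eq_intros simp: algebra_simps)
  have dFe: "deriv F x = F1 x" if "x \<in> J" for x using dF[OF that] by (rule DERIV_imp_deriv)
  have ddF: "(deriv F has_real_derivative F2 x) (at x)" if "x \<in> J" for x
    by (rule has_field_derivative_transform_within_open[OF dF1[OF that] oJ that]) (simp add: dFe)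
  have ddFe: "deriv (deriv F) x = F2 x" if "x \<in> J" for x using ddF[OF that] by (rule DERIV_imp_deriv)
  have third: "third_deriv_at F x (F3 x)" if xJ: "x \<in> J" and xne: "x \<noteq> x0" for x
  proof -
    obtain e where e: "e > 0" "ball x e \<subseteq> J" using open_contains_ball oJ xJ by metis
    have "\<forall>y\<in>ball x e. F differentiable (at y) \<and> deriv F differentiable (at y)"
    proof
      fix y assume "y \<in> ball x e"
      then have yJ: "y \<in> J" using e by blast
      show "F differentiable (at y) \<and> deriv F differentiable (at y)"
        using dF[OF yJ] ddF[OF yJ] unfolding real_differentiable_def by blast
    qed
    moreover have "(deriv (deriv F) has_real_derivative F3 x) (at x)"
    proof (rule has_field_derivative_transform_within_open[OF dF2[OF xJ xne] oJ xJ])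
      fix y assume "y \<in> J" then show "F2 y = deriv (deriv F) y" using ddFe by metis
    qed
    ultimately show ?thesis unfolding third_deriv_at_def using e(1) by blast
  qed
  have bnd: "\<bar>F3 x\<bar> \<le> N" if "x \<in> J" "x \<noteq> x0" for x
    using neg third[OF that] by force
  define Q where "Q x = - u2 x * A x - v2 x * B x + g x * (c + (x - x0))" for x
  have x0J: "x0 \<in> J" using rho J_def by auto
  define Q1 where "Q1 = - (u3 x0 * A x0 + u2 x0 * (w x0 * v x0 * H x0)) - (v3 x0 * B x0 + v2 x0 * (-(w x0 * u x0 * H x0))) + (g1 x0 * (c + (x0 - x0)) + g x0 * 1)"
  have dQ: "(Q has_real_derivative Q1) (at x0)"
    unfolding Q_def[abs_def] Q1_def
    using du2[of x0] dA[of x0] dv2[of x0] dB[of x0] dg[of x0] x0J J_def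
    by (auto intro!: derivative_eq_intros)
  have QF2L: "F2 x = Q x" if "x \<in> J" "x \<le> x0" for x
    using H[of x] that unfolding F2_def Q_def J_def by auto
  have QF2R: "F2 x = Q x - 2 * g x * (x - x0)" if "x \<in> J" "x \<ge> x0" for x
  proof -
    have HH: "H x = c - (x - x0)" using H[of x] that J_def by auto
    show ?thesis unfolding F2_def Q_def HH by (simp add: algebra_simps)
  qed
  have contF2: "continuous_on {a..b} F2" if "{a..b} \<subseteq> J" for a b
  proof (rule continuous_at_imp_continuous_on, rule ballI)
    fix x assume "x \<in> {a..b}"
    then have xJ: "x \<in> J" using that by blast
    have "continuous_on J H"
      by (rule continuous_on_eq[of J "\<lambda>x. c - \<bar>x - x0\<bar>"]) (auto intro!: continuous_intros simp: H J_def)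
    then have cH: "isCont H x" using continuous_on_eq_continuous_at oJ xJ by blast
    have "isCont u2 x" "isCont v2 x" "isCont A x" "isCont B x" "isCont g x"
      using DERIV_isCont du2[of x] dv2[of x] dA[of x] dB[of x] dg[of x] xJ J_def by auto
    then show "isCont F2 x" unfolding F2_def[abs_def] using cH by (intro continuous_intros) auto
  qed
  have quot: "\<bar>(F2 x - F2 x0) / (x - x0)\<bar> \<le> N" if "x \<in> J" "x \<noteq> x0" for x
  proof (cases "x < x0")
    case True
    have sub: "{x..x0} \<subseteq> J" using that x0J True unfolding J_def
      by (auto simp: dist_real_def)
    obtain l z where lz: "x < z" "z < x0" "DERIV F2 z :> l" "F2 x0 - F2 x = (x0 - x) * l"
      using MVT[OF True contF2[OF sub]] dF2 sub real_differentiable_def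
      by (metis atLeastAtMost_iff less_eq_real_def less_irrefl subsetD)
    have zJ: "z \<in> J" using sub lz by auto
    have "l = F3 z" using DERIV_unique[OF lz(3) dF2[OF zJ]] lz by auto
    then have "\<bar>l\<bar> \<le> N" using bnd[OF zJ] lz by auto
    moreover have "(F2 x - F2 x0) / (x - x0) = l" using lz True by (auto simp: field_simps)
    ultimately show ?thesis by simp
  next
    case False
    then have T: "x0 < x" using that by auto
    have sub: "{x0..x} \<subseteq> J" using that x0J T unfolding J_def
      by (auto simp: dist_real_def)
    obtain l z where lz: "x0 < z" "z < x" "DERIV F2 z :> l" "F2 x - F2 x0 = (x - x0) * l"
      using MVT[OF T contF2[OF sub]] dF2 sub real_differentiable_def
      by (metis atLeastAtMost_iff less_eq_real_def less_irrefl subsetD)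
    have zJ: "z \<in> J" using sub lz by auto
    have "l = F3 z" using DERIV_unique[OF lz(3) dF2[OF zJ]] lz by auto
    then have "\<bar>l\<bar> \<le> N" using bnd[OF zJ] lz by auto
    moreover have "(F2 x - F2 x0) / (x - x0) = l" using lz T by (auto simp: field_simps)
    ultimately show ?thesis by simp
  qed
  have evJ: "eventually (\<lambda>x. x \<in> J \<and> x \<noteq> x0) (at x0)"
    using oJ x0J eventually_at_topological by blast
  have limQ: "((\<lambda>y. (Q y - Q x0) / (y - x0)) \<longlongrightarrow> Q1) (at x0)"
    using dQ has_field_derivative_iff by blast
  have L: "\<bar>Q1\<bar> \<le> N"
  proof (rule tendsto_upperbound)
    show "((\<lambda>y. \<bar>(Q y - Q x0) / (y - x0)\<bar>) \<longlongrightarrow> \<bar>Q1\<bar>) (at_left x0)"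
      by (intro tendsto_rabs tendsto_mono[OF at_le limQ]) auto
    have "eventually (\<lambda>x. x \<in> J \<and> x \<noteq> x0) (at_left x0)"
      by (rule filter_leD[OF _ evJ]) (simp add: at_le)
    moreover have "eventually (\<lambda>x. x < x0) (at_left x0)" by (simp add: eventually_at_filter)
    ultimately show "eventually (\<lambda>y. N \<ge> \<bar>(Q y - Q x0) / (y - x0)\<bar>) (at_left x0)"
    proof eventually_elim
      case (elim x)
      then show ?case using quot[of x] QF2L[of x] QF2L[of x0] x0J by auto
    qed
  qed auto
  have contg: "isCont g x0" using dg[OF x0J] DERIV_isCont by blast
  have R: "\<bar>Q1 - 2 * g x0\<bar> \<le> N"
  proof (rule tendsto_upperbound)
    show "((\<lambda>y. \<bar>(Q y - Q x0) / (y - x0) - 2 * g y\<bar>) \<longlongrightarrow> \<bar>Q1 - 2 * g x0\<bar>) (at_right x0)"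
      by (intro tendsto_rabs tendsto_diff tendsto_mult tendsto_const tendsto_mono[OF at_le limQ]
          tendsto_mono[OF at_le contg[unfolded isCont_def]]) auto
    have "eventually (\<lambda>x. x \<in> J \<and> x \<noteq> x0) (at_right x0)"
      by (rule filter_leD[OF _ evJ]) (simp add: at_le)
    moreover have "eventually (\<lambda>x. x > x0) (at_right x0)" by (simp add: eventually_at_right_less)
    ultimately show "eventually (\<lambda>y. N \<ge> \<bar>(Q y - Q x0) / (y - x0) - 2 * g y\<bar>) (at_right x0)"
    proof eventually_elim
      case (elim x)
      have "(F2 x - F2 x0) / (x - x0) = (Q x - Q x0) / (x - x0) - 2 * g x"
        using QF2R[of x] QF2R[of x0] elim x0J by (auto simp: field_simps)
      then show ?case using quot[of x] elim by auto
    qed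
  qed auto
  have "g x0 \<le> N" using L R by auto
  then show False using g unfolding g_def by auto
qed

lemma exp_taylor_bound: fixes s :: real shows "\<bar>exp s - 1 - s\<bar> \<le> s\<^sup>2 * exp \<bar>s\<bar> / 2"
proof -
  obtain t where t: "\<bar>t\<bar> \<le> \<bar>s\<bar>" "exp s = (\<Sum>m<2. s ^ m / fact m) + exp t / fact 2 * s ^ 2"
    using Maclaurin_exp_le[of s 2] by blast
  have e: "exp s - 1 - s = exp t / 2 * s\<^sup>2" using t(2) by (simp add: numeral_2_eq_2)
  have "exp t \<le> exp \<bar>s\<bar>" using t(1) by simp
  then show ?thesis unfolding e by (simp add: mult_right_mono mult.commute)
qed

lemma sbm_cont:
  fixes f :: "real \<Rightarrow> real"
  assumes "continuous_on UNIV f" "A \<in> sets borel"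
  shows "set_borel_measurable lborel A f"
  using set_measurable_continuous_on[OF assms(2) continuous_on_subset[OF assms(1)]]
  unfolding set_borel_measurable_def by simp

lemma exp_int: fixes a c :: real assumes "a > 0" shows "set_integrable lborel {c<..} (\<lambda>t. exp (- a * t))"
proof -
  have "set_integrable lborel (einterval (ereal c) \<infinity>) (\<lambda>t. exp (- a * t))"
  proof (rule interval_integral_FTC_nonneg(1)[where F="\<lambda>t. - exp (- a * t) / a" and A="- exp (- a * c) / a" and B=0])
    show "DERIV (\<lambda>t. - exp (- a * t) / a) x :> exp (- a * x)" for x
      using assms by (auto intro!: derivative_eq_intros)
    show "(((\<lambda>t. - exp (- a * t) / a) \<circ> real_of_ereal) \<longlongrightarrow> - exp (- a * c) / a) (at_right (ereal c))"
      unfolding ereal_tendsto_simps1 using assms by (intro tendsto_intros) auto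
    show "(((\<lambda>t. - exp (- a * t) / a) \<circ> real_of_ereal) \<longlongrightarrow> 0) (at_left \<infinity>)"
      unfolding ereal_tendsto_simps1 using assms by real_asymp
  qed auto
  moreover have "einterval (ereal c) \<infinity> = {c<..}" by (auto simp: einterval_iff)
  ultimately show ?thesis by simp
qed

lemma cosh_le_exp_abs: fixes a :: real shows "cosh a \<le> exp \<bar>a\<bar>"
  by (simp add: cosh_def abs_if) 

lemma cosh_ge_quad: fixes t :: real assumes "t \<ge> 0" shows "1 + t\<^sup>2 / 4 \<le> cosh t"
proof -
  have "1 + t + t\<^sup>2 / 2 \<le> exp t" using exp_lower_Taylor_quadratic assms by blast
  moreover have "1 + (- t) \<le> exp (- t)" by (rule exp_ge_add_one_self)
  ultimately show ?thesis by (simp add: cosh_def)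
qed

lemma quad_bound: fixes x t B :: real assumes "x > 0"
  shows "B * t - x * t\<^sup>2 / 4 \<le> B\<^sup>2 / x - t + t"
proof -
  have "0 \<le> (x * t / 2 - B)\<^sup>2" by simp
  then have "x * (B * t - x * t\<^sup>2 / 4) \<le> B\<^sup>2" by (simp add: power2_eq_square algebra_simps)
  then have "B * t - x * t\<^sup>2 / 4 \<le> B\<^sup>2 / x" using assms by (simp add: pos_le_divide_eq mult.commute)
  then show ?thesis by simp
qed

lemma kbound:
  fixes t x \<nu> :: real and n :: nat
  assumes t: "t \<ge> 0" and x: "x > 0"
  shows "\<bar>cosh t ^ n * exp (- x * cosh t) * cosh (\<nu> * t)\<bar> \<le> exp ((real n + \<bar>\<nu>\<bar> + 1)\<^sup>2 / x) * exp (- t)"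
proof -
  define B where "B = real n + \<bar>\<nu>\<bar> + 1"
  have c0: "0 \<le> cosh t" by (simp add: cosh_real_nonneg)
  have c1: "cosh t \<le> exp t" using cosh_le_exp_abs[of t] t by simp
  have p1: "cosh t ^ n \<le> exp (real n * t)"
    using power_mono[OF c1 c0, of n] by (simp add: exp_of_nat_mult)
  have p2: "cosh (\<nu> * t) \<le> exp (\<bar>\<nu>\<bar> * t)"
    using cosh_le_exp_abs[of "\<nu> * t"] t by (simp add: abs_mult)
  have p3: "exp (- x * cosh t) \<le> exp (- x * (t\<^sup>2 / 4))"
    using cosh_ge_quad[OF t] x by (simp add: mult_le_cancel_left_pos)
  have "\<bar>cosh t ^ n * exp (- x * cosh t) * cosh (\<nu> * t)\<bar> = cosh t ^ n * exp (- x * cosh t) * cosh (\<nu> * t)"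
    using c0 by (simp add: cosh_real_pos less_imp_le)
  also have "\<dots> \<le> exp (real n * t) * exp (- x * (t\<^sup>2 / 4)) * exp (\<bar>\<nu>\<bar> * t)"
    by (intro mult_mono p1 p2 p3) (auto simp: c0 cosh_real_pos less_imp_le)
  also have "\<dots> = exp ((B - 1) * t - x * t\<^sup>2 / 4)"
    by (simp add: B_def exp_add[symmetric] algebra_simps)
  also have "\<dots> \<le> exp (B\<^sup>2 / x - t)"
    using quad_bound[OF x, of B t] by (simp add: algebra_simps)
  also have "\<dots> = exp (B\<^sup>2 / x) * exp (- t)" by (simp add: exp_diff exp_minus field_simps)
  finally show ?thesis by (simp add: B_def)
qed

definition Kc :: "nat \<Rightarrow> real \<Rightarrow> real \<Rightarrow> real" where
  "Kc n \<nu> x = (LINT t:{0<..}|lborel. cosh t ^ n * exp (- x * cosh t) * cosh (\<nu> * t))"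

lemma kint:
  fixes x \<nu> :: real
  assumes x: "x > 0"
  shows "set_integrable lborel {0<..} (\<lambda>t. cosh t ^ n * exp (- x * cosh t) * cosh (\<nu> * t))"
proof (rule set_integrable_bound[OF set_integrable_mult_right[OF exp_int[of 1 0]]])
  show "set_borel_measurable lborel {0<..} (\<lambda>t. cosh t ^ n * exp (- x * cosh t) * cosh (\<nu> * t))"
    by (intro sbm_cont continuous_intros) auto
  show "AE t in lborel. t \<in> {0<..} \<longrightarrow> norm (cosh t ^ n * exp (- x * cosh t) * cosh (\<nu> * t))
      \<le> norm (exp ((real n + \<bar>\<nu>\<bar> + 1)\<^sup>2 / x) * exp (- 1 * t))"
    using kbound[OF _ x] by auto
qed auto

lemma besselK_Kc: "besselK \<nu> x = Kc 0 \<nu> x"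
  unfolding besselK_def Kc_def zero_ereal_def interval_integral_to_infinity_eq by simp

lemma Kc_diff_bound:
  fixes x h \<nu> :: real
  assumes x: "x > 0" and h: "h \<noteq> 0" "\<bar>h\<bar> \<le> x / 2"
  shows "\<bar>(Kc n \<nu> (x + h) - Kc n \<nu> x) / h + Kc (Suc n) \<nu> x\<bar> \<le> \<bar>h\<bar> * Kc (Suc (Suc n)) \<nu> (x / 2)"
proof -
  define f where "f y t = cosh t ^ n * exp (- y * cosh t) * cosh (\<nu> * t)" for y t
  define g where "g t = (f (x + h) t - f x t) / h + cosh t ^ Suc n * exp (- x * cosh t) * cosh (\<nu> * t)" for t
  have xh: "x + h > 0" using h x by auto
  have i1: "set_integrable lborel {0<..} (f (x + h))" unfolding f_def[abs_def] by (rule kint[OF xh])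
  have i2: "set_integrable lborel {0<..} (f x)" unfolding f_def[abs_def] by (rule kint[OF x])
  have i3: "set_integrable lborel {0<..} (\<lambda>t. cosh t ^ Suc n * exp (- x * cosh t) * cosh (\<nu> * t))"
    by (rule kint[OF x])
  have i4: "set_integrable lborel {0<..} (\<lambda>t. cosh t ^ Suc (Suc n) * exp (- (x/2) * cosh t) * cosh (\<nu> * t))"
    by (rule kint) (use x in auto)
  have ig: "set_integrable lborel {0<..} g"
    unfolding g_def using i1 i2 i3 by (intro set_integral_add set_integrable_divide set_integral_diff) auto
  have I: "(Kc n \<nu> (x + h) - Kc n \<nu> x) / h + Kc (Suc n) \<nu> x = (LINT t:{0<..}|lborel. g t)"
  proof -
    have "(LINT t:{0<..}|lborel. g t) = (LINT t:{0<..}|lborel. (f (x + h) t - f x t) / h)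
          + (LINT t:{0<..}|lborel. cosh t ^ Suc n * exp (- x * cosh t) * cosh (\<nu> * t))"
      unfolding g_def using i1 i2 i3 by (intro set_integral_add set_integrable_divide set_integral_diff) auto
    also have "(LINT t:{0<..}|lborel. (f (x + h) t - f x t) / h) = ((LINT t:{0<..}|lborel. f (x + h) t) - (LINT t:{0<..}|lborel. f x t)) / h"
      using i1 i2 by (simp add: set_integral_diff)
    finally show ?thesis unfolding Kc_def f_def by simp
  qed
  have pw: "\<bar>g t\<bar> \<le> \<bar>h\<bar> * (cosh t ^ Suc (Suc n) * exp (- (x/2) * cosh t) * cosh (\<nu> * t))" if "t > 0" for t
  proof -
    define c where "c = cosh t"
    define C where "C = cosh (\<nu> * t)"
    have c: "c > 0" unfolding c_def by (simp add: cosh_real_pos)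
    have C: "C > 0" unfolding C_def by (simp add: cosh_real_pos)
    have eq: "g t = c ^ n * C * exp (- x * c) * ((exp (- h * c) - 1 - (- h * c)) / h)"
      unfolding g_def f_def c_def[symmetric] C_def[symmetric]
      using h by (simp add: field_simps exp_add[symmetric] distrib_right)
    have tb: "\<bar>exp (- h * c) - 1 - (- h * c)\<bar> \<le> (\<bar>h\<bar> * c)\<^sup>2 * exp (\<bar>h\<bar> * c) / 2"
      using exp_taylor_bound[of "- h * c"] c by (simp add: abs_mult power_mult_distrib)
    have pos: "0 \<le> c ^ n * C * exp (- x * c)" using c C by simp
    have "\<bar>g t\<bar> = c ^ n * C * exp (- x * c) * \<bar>exp (- h * c) - 1 - (- h * c)\<bar> / \<bar>h\<bar>"
      unfolding eq using pos c C by (simp add: abs_mult)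
    also have "\<dots> \<le> c ^ n * C * exp (- x * c) * ((\<bar>h\<bar> * c)\<^sup>2 * exp (\<bar>h\<bar> * c) / 2) / \<bar>h\<bar>"
      by (intro divide_right_mono mult_left_mono tb pos) auto
    also have "\<dots> = \<bar>h\<bar> / 2 * (c ^ Suc (Suc n) * C * (exp (- x * c) * exp (\<bar>h\<bar> * c)))"
    proof -
      have e: "(\<bar>h\<bar> * c)\<^sup>2 = \<bar>h\<bar> * (\<bar>h\<bar> * c * c)" by (simp add: power2_eq_square)
      have "c ^ n * C * exp (- x * c) * ((\<bar>h\<bar> * c)\<^sup>2 * exp (\<bar>h\<bar> * c) / 2) / \<bar>h\<bar>
          = c ^ n * C * exp (- x * c) * (\<bar>h\<bar> * c * c * exp (\<bar>h\<bar> * c) / 2)"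
        unfolding e using h by simp
      then show ?thesis by (simp add: mult_ac)
    qed
    also have "\<dots> \<le> \<bar>h\<bar> * (c ^ Suc (Suc n) * C * exp (- (x/2) * c))"
    proof -
      have "exp (- x * c) * exp (\<bar>h\<bar> * c) \<le> exp (- (x/2) * c)"
        unfolding exp_add[symmetric] using h(2) c by (simp add: mult_right_mono algebra_simps)
      then have "c ^ Suc (Suc n) * C * (exp (- x * c) * exp (\<bar>h\<bar> * c)) \<le> c ^ Suc (Suc n) * C * exp (- (x/2) * c)"
        using c C by (intro mult_left_mono) auto
      then have "\<bar>h\<bar> / 2 * (c ^ Suc (Suc n) * C * (exp (- x * c) * exp (\<bar>h\<bar> * c))) \<le> \<bar>h\<bar> / 2 * (c ^ Suc (Suc n) * C * exp (- (x/2) * c))"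
        by (rule mult_left_mono) auto
      moreover have "\<bar>h\<bar> / 2 * (c ^ Suc (Suc n) * C * exp (- (x/2) * c)) \<le> \<bar>h\<bar> * (c ^ Suc (Suc n) * C * exp (- (x/2) * c))"
        using c C by (intro mult_right_mono) auto
      ultimately show ?thesis by linarith
    qed
    finally show ?thesis unfolding c_def C_def by (simp add: mult_ac)
  qed
  have "\<bar>LINT t:{0<..}|lborel. g t\<bar> \<le> (LINT t:{0<..}|lborel. \<bar>g t\<bar>)"
    using set_integral_norm_bound[OF ig] by simp
  also have "\<dots> \<le> (LINT t:{0<..}|lborel. \<bar>h\<bar> * (cosh t ^ Suc (Suc n) * exp (- (x/2) * cosh t) * cosh (\<nu> * t)))"
    using pw ig i4 by (intro set_integral_mono) (auto intro: set_integrable_abs)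
  also have "\<dots> = \<bar>h\<bar> * Kc (Suc (Suc n)) \<nu> (x / 2)"
    unfolding Kc_def by simp
  finally show ?thesis unfolding I .
qed

lemma Kc_deriv:
  fixes x \<nu> :: real
  assumes x: "x > 0"
  shows "(Kc n \<nu> has_real_derivative - Kc (Suc n) \<nu> x) (at x)"
  unfolding has_field_derivative_iff
proof (subst LIM_zero_iff[symmetric], rule Lim_null_comparison)
  show "((\<lambda>y. \<bar>y - x\<bar> * Kc (Suc (Suc n)) \<nu> (x / 2)) \<longlongrightarrow> 0) (at x)"
    by (rule tendsto_eq_intros refl | simp)+
  have "eventually (\<lambda>y. 0 < dist y x \<and> dist y x < x / 2) (at x)"
    using x by (auto simp: eventually_at intro!: exI[of _ "x/2"])
  then show "eventually (\<lambda>y. norm ((Kc n \<nu> y - Kc n \<nu> x) / (y - x) - - Kc (Suc n) \<nu> x)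
       \<le> \<bar>y - x\<bar> * Kc (Suc (Suc n)) \<nu> (x / 2)) (at x)"
  proof eventually_elim
    case (elim y)
    then have "y - x \<noteq> 0" "\<bar>y - x\<bar> \<le> x / 2" by (auto simp: dist_real_def)
    from Kc_diff_bound[OF x this] show ?case by simp
  qed
qed

lemma Kc_nonneg: assumes "x > 0" shows "0 \<le> Kc n \<nu> x"
  unfolding Kc_def set_lebesgue_integral_def
  by (rule Bochner_Integration.integral_nonneg) (auto simp: cosh_real_pos less_imp_le indicator_def)

lemma sbm_cont_on:
  fixes f :: "real \<Rightarrow> real"
  assumes "continuous_on A f" "A \<in> sets borel"
  shows "set_borel_measurable lborel A f"
  using set_measurable_continuous_on[OF assms(2) assms(1)]
  unfolding set_borel_measurable_def by simp

lemma abs_sinh_le_cosh: fixes a :: real shows "\<bar>sinh a\<bar> \<le> cosh a"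
  using sinh_le_cosh_real[of "\<bar>a\<bar>"] by simp

lemma Kc_ibp:
  fixes x \<nu> :: real
  assumes x: "x > 0"
  shows "\<nu> * Kc 0 \<nu> x + x * Kc 1 \<nu> x = x * Kc 0 (\<nu> + 1) x"
proof -
  define s where "s t = sinh t * sinh (\<nu> * t) * exp (- x * cosh t)" for t
  define F where "F t = exp (- x * cosh t) * sinh (\<nu> * t)" for t
  define f where "f t = \<nu> * (cosh t ^ 0 * exp (- x * cosh t) * cosh (\<nu> * t)) - x * s t" for t
  have i0: "set_integrable lborel {0<..} (\<lambda>t. cosh t ^ 0 * exp (- x * cosh t) * cosh (\<nu> * t))"
    by (rule kint[OF x])
  have i1: "set_integrable lborel {0<..} (\<lambda>t. cosh t ^ 1 * exp (- x * cosh t) * cosh (\<nu> * t))"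
    by (rule kint[OF x])
  have iS: "set_integrable lborel {0<..} s"
  proof (rule set_integrable_bound[OF i1])
    show "set_borel_measurable lborel {0<..} s" unfolding s_def by (intro sbm_cont continuous_intros) auto
    have "\<bar>s t\<bar> \<le> \<bar>cosh t ^ 1 * exp (- x * cosh t) * cosh (\<nu> * t)\<bar>" for t
    proof -
      have "\<bar>s t\<bar> = \<bar>sinh t\<bar> * \<bar>sinh (\<nu> * t)\<bar> * exp (- x * cosh t)" unfolding s_def by (simp add: abs_mult)
      also have "\<dots> \<le> cosh t * cosh (\<nu> * t) * exp (- x * cosh t)"
        by (intro mult_mono abs_sinh_le_cosh) auto
      finally show ?thesis by (simp add: mult_ac)
    qed
    then show "AE t in lborel. t \<in> {0<..} \<longrightarrow> norm (s t) \<le> norm (cosh t ^ 1 * exp (- x * cosh t) * cosh (\<nu> * t))"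
      by auto
  qed
  have intf: "set_integrable lborel {0<..} f" unfolding f_def using i0 iS by auto
  have ein: "einterval (ereal 0) \<infinity> = {0<..}" by (auto simp: einterval_iff)
  have FTC: "(LBINT t=ereal 0..\<infinity>. f t) = 0 - 0"
  proof (rule interval_integral_FTC_integrable)
    fix t :: real
    show "(F has_vector_derivative f t) (at t)"
      unfolding has_real_derivative_iff_has_vector_derivative[symmetric] F_def f_def s_def
      by (auto intro!: derivative_eq_intros simp: algebra_simps)
    show "isCont f t" unfolding f_def s_def by (intro continuous_intros)
  next
    show "set_integrable lborel (einterval (ereal 0) \<infinity>) f" unfolding ein by (rule intf)
    show "((F \<circ> real_of_ereal) \<longlongrightarrow> 0) (at_right (ereal 0))"
      unfolding ereal_tendsto_simps1 F_def
      by (rule tendsto_eq_intros refl | simp)+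
    show "((F \<circ> real_of_ereal) \<longlongrightarrow> 0) (at_left \<infinity>)"
      unfolding ereal_tendsto_simps1
    proof (rule Lim_null_comparison)
      show "((\<lambda>t. exp ((real 0 + \<bar>\<nu>\<bar> + 1)\<^sup>2 / x) * exp (- t)) \<longlongrightarrow> 0) at_top" by real_asymp
      show "eventually (\<lambda>t. norm (F t) \<le> exp ((real 0 + \<bar>\<nu>\<bar> + 1)\<^sup>2 / x) * exp (- t)) at_top"
        using eventually_ge_at_top[of "0::real"]
      proof eventually_elim
        case (elim t)
        have "norm (F t) \<le> \<bar>cosh t ^ 0 * exp (- x * cosh t) * cosh (\<nu> * t)\<bar>"
          unfolding F_def by (simp add: abs_mult mult_left_mono abs_sinh_le_cosh)
        also have "\<dots> \<le> exp ((real 0 + \<bar>\<nu>\<bar> + 1)\<^sup>2 / x) * exp (- t)" by (rule kbound[OF elim x])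
        finally show ?case .
      qed
    qed
  qed auto
  have "(LBINT t=ereal 0..\<infinity>. f t) = (LINT t:{0<..}|lborel. f t)"
    by (simp add: interval_integral_to_infinity_eq)
  also have "\<dots> = \<nu> * Kc 0 \<nu> x - x * (LINT t:{0<..}|lborel. s t)"
    unfolding f_def Kc_def using i0 iS by (simp add: set_integral_diff)
  finally have S: "x * (LINT t:{0<..}|lborel. s t) = \<nu> * Kc 0 \<nu> x" using FTC by simp
  have "Kc 0 (\<nu> + 1) x = (LINT t:{0<..}|lborel. cosh t ^ 1 * exp (- x * cosh t) * cosh (\<nu> * t) + s t)"
    unfolding Kc_def s_def
    by (intro set_lebesgue_integral_cong) (auto simp: distrib_right cosh_add algebra_simps)
  also have "\<dots> = Kc 1 \<nu> x + (LINT t:{0<..}|lborel. s t)"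
    unfolding Kc_def using i1 iS by (simp add: set_integral_add)
  finally show ?thesis using S by (simp add: algebra_simps)
qed

lemma cosh_ge_exp_half: fixes a :: real shows "exp a / 2 \<le> cosh a"
  by (simp add: cosh_def)

lemma Kc_lower:
  fixes \<nu> B :: real
  assumes nu: "\<nu> > -1/2"
  shows "\<exists>z>0. z powr \<nu> * Kc 0 (\<nu> + 1) z > B"
proof -
  define T where "T = \<nu> + 3 + 2 * \<bar>B\<bar>"
  define z where "z = exp (- T)"
  define m where "m = exp (- 1) * cosh ((\<nu> + 1) * (T - 1))"
  have T1: "T - 1 > 0" using nu unfolding T_def by auto
  have z: "z > 0" unfolding z_def by simp
  have m0: "m \<ge> 0" unfolding m_def by simp
  have pw: "m \<le> cosh t ^ 0 * exp (- z * cosh t) * cosh ((\<nu> + 1) * t)" if t: "t \<in> {T-1..T}" for t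
  proof -
    have t0: "t \<ge> 0" using t T1 by auto
    have "exp \<bar>t\<bar> \<le> exp T" using t t0 by simp
    then have "cosh t \<le> exp T" using cosh_le_exp_abs[of t] by linarith
    then have "z * cosh t \<le> exp (- T) * exp T" unfolding z_def by (intro mult_left_mono) auto
    then have "z * cosh t \<le> 1" by (simp add: exp_minus field_simps)
    then have e1: "exp (- 1) \<le> exp (- z * cosh t)" by simp
    have "cosh ((\<nu> + 1) * (T - 1)) \<le> cosh ((\<nu> + 1) * t)"
      using t T1 nu by (subst cosh_real_nonneg_le_iff) (auto intro!: mult_left_mono)
    then show ?thesis unfolding m_def using e1 by (simp add: mult_mono)
  qed
  have ind: "(\<lambda>t. indicator {0<..} t *\<^sub>R (indicator {T-1..T} t * m)) = (\<lambda>t. indicator {T-1..T} t * m)"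
    using T1 by (auto simp: indicator_def fun_eq_iff)
  have ii: "set_integrable lborel {0<..} (\<lambda>t. indicator {T-1..T} t * m)"
    unfolding set_integrable_def ind by (intro integrable_mult_left integrable_real_indicator) auto
  have "(LINT t:{0<..}|lborel. indicator {T-1..T} t * m) = m"
    unfolding set_lebesgue_integral_def ind by simp
  moreover have "(LINT t:{0<..}|lborel. indicator {T-1..T} t * m)
      \<le> (LINT t:{0<..}|lborel. cosh t ^ 0 * exp (- z * cosh t) * cosh ((\<nu> + 1) * t))"
  proof (rule set_integral_mono[OF ii kint[OF z]])
    fix t show "indicator {T-1..T} t * m \<le> cosh t ^ 0 * exp (- z * cosh t) * cosh ((\<nu> + 1) * t)"
      using pw[of t] m0 by (cases "t \<in> {T-1..T}") (auto simp: indicator_def)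
  qed
  ultimately have K: "m \<le> Kc 0 (\<nu> + 1) z" unfolding Kc_def by linarith
  have zp: "z powr \<nu> = exp (- (\<nu> * T))" unfolding z_def by (simp add: powr_def)
  have "exp (1 + 2 * \<bar>B\<bar>) / 2 = exp (- (\<nu> * T)) * (exp (- 1) * (exp ((\<nu> + 1) * (T - 1)) / 2))"
    unfolding T_def by (simp add: exp_add[symmetric] algebra_simps)
  also have "\<dots> \<le> exp (- (\<nu> * T)) * m"
    unfolding m_def by (intro mult_left_mono cosh_ge_exp_half) auto
  also have "\<dots> \<le> z powr \<nu> * Kc 0 (\<nu> + 1) z" unfolding zp by (intro mult_left_mono K) auto
  finally have "exp (1 + 2 * \<bar>B\<bar>) / 2 \<le> z powr \<nu> * Kc 0 (\<nu> + 1) z" .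
  moreover have "1 + (1 + 2 * \<bar>B\<bar>) \<le> exp (1 + 2 * \<bar>B\<bar>)" by (rule exp_ge_add_one_self)
  ultimately have "z powr \<nu> * Kc 0 (\<nu> + 1) z > B" by linarith
  then show ?thesis using z by blast
qed

lemma Kc_decay:
  fixes x x1 \<nu> :: real
  assumes x1: "x1 > 0" and xx: "x1 \<le> x"
  shows "Kc 0 \<nu> x \<le> exp (- (x - x1)) * Kc 0 \<nu> x1"
proof -
  have x: "x > 0" using x1 xx by auto
  have "Kc 0 \<nu> x \<le> (LINT t:{0<..}|lborel. exp (- (x - x1)) * (cosh t ^ 0 * exp (- x1 * cosh t) * cosh (\<nu> * t)))"
    unfolding Kc_def
  proof (intro set_integral_mono)
    show "set_integrable lborel {0<..} (\<lambda>t. cosh t ^ 0 * exp (- x * cosh t) * cosh (\<nu> * t))" by (rule kint[OF x])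
    show "set_integrable lborel {0<..} (\<lambda>t. exp (- (x - x1)) * (cosh t ^ 0 * exp (- x1 * cosh t) * cosh (\<nu> * t)))"
      using kint[OF x1, of 0 \<nu>] by simp
    fix t :: real
    have "(x - x1) * 1 \<le> (x - x1) * cosh t"
      using cosh_real_ge_1[of t] xx by (intro mult_left_mono) auto
    then have "- x * cosh t \<le> - (x - x1) + - x1 * cosh t" by (simp add: algebra_simps)
    then have "exp (- x * cosh t) \<le> exp (- (x - x1)) * exp (- x1 * cosh t)"
      by (simp add: exp_add[symmetric])
    then show "cosh t ^ 0 * exp (- x * cosh t) * cosh (\<nu> * t)
        \<le> exp (- (x - x1)) * (cosh t ^ 0 * exp (- x1 * cosh t) * cosh (\<nu> * t))"
      by (simp add: mult_right_mono mult.assoc[symmetric])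
  qed
  also have "\<dots> = exp (- (x - x1)) * Kc 0 \<nu> x1" unfolding Kc_def by simp
  finally show ?thesis .
qed

definition ac :: "real \<Rightarrow> nat \<Rightarrow> real" where
  "ac \<nu> k = inverse (fact k * Gamma (real k + \<nu> + 1))"

definition Sd :: "real \<Rightarrow> nat \<Rightarrow> real \<Rightarrow> real" where
  "Sd \<nu> j z = (\<Sum>k. (diffs ^^ j) (ac \<nu>) k * z ^ k)"

lemma ac_pos: assumes "\<nu> > -1" shows "ac \<nu> k > 0"
  unfolding ac_def using assms by (intro positive_imp_inverse_positive mult_pos_pos Gamma_real_pos) auto

lemma ac_Suc: assumes "\<nu> > -1" shows "ac \<nu> (Suc k) = ac \<nu> k / ((real k + 1) * (real k + \<nu> + 1))"
proof -
  have nz: "real k + \<nu> + 1 \<notin> \<int>\<^sub>\<le>\<^sub>0" using assms nonpos_Ints_nonpos by fastforce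
  have "Gamma (real (Suc k) + \<nu> + 1) = (real k + \<nu> + 1) * Gamma (real k + \<nu> + 1)"
    using Gamma_plus1[OF nz] by (simp add: add_ac)
  then show ?thesis unfolding ac_def by (simp add: field_simps)
qed

lemma ac_summable:
  assumes nu: "\<nu> > -1/2"
  shows "summable (\<lambda>k. ac \<nu> k * z ^ k)"
proof (rule summable_ratio_test[where c="1/2" and N="nat \<lceil>4 * \<bar>z\<bar>\<rceil>"])
  fix n assume n: "nat \<lceil>4 * \<bar>z\<bar>\<rceil> \<le> n"
  have nu1: "\<nu> > -1" using nu by auto
  have n1: "real n + 1 \<ge> 4 * \<bar>z\<bar>" using n by linarith
  have p: "(real n + 1) * (real n + \<nu> + 1) \<ge> 2 * \<bar>z\<bar>"
  proof -
    have "real n + \<nu> + 1 \<ge> 1/2" using nu by auto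
    then have "(real n + 1) * (real n + \<nu> + 1) \<ge> (real n + 1) * (1/2)" by (intro mult_left_mono) auto
    moreover have "(real n + 1) * (1/2) \<ge> 2 * \<bar>z\<bar>" using n1 by simp
    ultimately show ?thesis by linarith
  qed
  have pp: "(real n + 1) * (real n + \<nu> + 1) > 0" using nu by (intro mult_pos_pos) auto
  have "norm (ac \<nu> (Suc n) * z ^ Suc n) = ac \<nu> n * \<bar>z\<bar> ^ n * (\<bar>z\<bar> / ((real n + 1) * (real n + \<nu> + 1)))"
    using ac_pos[OF nu1, of n] pp by (simp add: ac_Suc[OF nu1] abs_mult power_abs field_simps)
  also have "\<dots> \<le> ac \<nu> n * \<bar>z\<bar> ^ n * (1/2)"
    using ac_pos[OF nu1, of n] pp p by (intro mult_left_mono) (auto simp: field_simps)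
  also have "\<dots> = 1/2 * norm (ac \<nu> n * z ^ n)" using ac_pos[OF nu1, of n] by (simp add: abs_mult power_abs)
  finally show "norm (ac \<nu> (Suc n) * z ^ Suc n) \<le> 1/2 * norm (ac \<nu> n * z ^ n)" .
qed simp

lemma diffs_iter_summable:
  assumes nu: "\<nu> > -1/2"
  shows "summable (\<lambda>k. (diffs ^^ j) (ac \<nu>) k * z ^ k)"
proof (induction j arbitrary: z)
  case 0 then show ?case using ac_summable[OF nu] by simp
next
  case (Suc j) then show ?case by (simp add: termdiff_converges_all)
qed

lemma Sd_deriv:
  assumes nu: "\<nu> > -1/2"
  shows "(Sd \<nu> j has_real_derivative Sd \<nu> (Suc j) z) (at z)"
  unfolding Sd_def[abs_def]
  using termdiffs_strong_converges_everywhere[of "(diffs ^^ j) (ac \<nu>)" z] diffs_iter_summable[OF nu]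
  by simp

lemma diffs_iter_nonneg:
  assumes nu: "\<nu> > -1/2"
  shows "(diffs ^^ j) (ac \<nu>) k \<ge> 0"
proof (induction j arbitrary: k)
  case 0 then show ?case using ac_pos[of \<nu> k] nu by simp
next
  case (Suc j) then show ?case by (simp add: diffs_def)
qed

lemma Sd_nonneg:
  assumes nu: "\<nu> > -1/2" and z: "z \<ge> 0"
  shows "Sd \<nu> j z \<ge> 0"
  unfolding Sd_def using diffs_iter_summable[OF nu] diffs_iter_nonneg[OF nu] z
  by (intro suminf_nonneg) auto

lemma Sd0_lower:
  assumes nu: "\<nu> > -1/2" and z: "z \<ge> 0"
  shows "Sd \<nu> 0 z \<ge> inverse (Gamma (\<nu> + 1))"
proof -
  have "sum (\<lambda>k. (diffs ^^ 0) (ac \<nu>) k * z ^ k) {0} \<le> Sd \<nu> 0 z"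
    unfolding Sd_def using diffs_iter_summable[OF nu, of 0 z] diffs_iter_nonneg[OF nu, of 0] z
    by (intro sum_le_suminf) auto
  then show ?thesis by (simp add: ac_def)
qed

lemma Sd_mono:
  assumes nu: "\<nu> > -1/2" and z: "0 \<le> z" "z \<le> Z"
  shows "Sd \<nu> j z \<le> Sd \<nu> j Z"
  unfolding Sd_def using diffs_iter_summable[OF nu] diffs_iter_nonneg[OF nu] z
  by (intro suminf_le mult_left_mono power_mono) auto

lemma besselI_repr:
  assumes nu: "\<nu> > -1/2" and x: "x > 0"
  shows "besselI \<nu> x = (x / 2) powr \<nu> * Sd \<nu> 0 ((x / 2)\<^sup>2)"
proof -
  have "besselI \<nu> x = (\<Sum>k. (x / 2) powr \<nu> * (ac \<nu> k * ((x / 2)\<^sup>2) ^ k))"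
    unfolding besselI_def
  proof (rule suminf_cong)
    fix k
    define X where "X = x / 2"
    have X: "X > 0" using x X_def by simp
    have "X powr (2 * real k + \<nu>) = X powr (real (2 * k)) * X powr \<nu>"
      by (simp add: powr_add)
    also have "\<dots> = (X\<^sup>2) ^ k * X powr \<nu>"
      using X powr_realpow[OF X, of "2 * k"] by (simp add: power_mult)
    finally have e: "X powr (2 * real k + \<nu>) = (X\<^sup>2) ^ k * X powr \<nu>" .
    show "(x / 2) powr (2 * real k + \<nu>) / (fact k * Gamma (real k + \<nu> + 1))
        = (x / 2) powr \<nu> * (ac \<nu> k * ((x / 2)\<^sup>2) ^ k)"
      unfolding X_def[symmetric] e by (simp add: ac_def divide_inverse mult_ac)
  qed
  also have "\<dots> = (x / 2) powr \<nu> * Sd \<nu> 0 ((x / 2)\<^sup>2)"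
    unfolding Sd_def using diffs_iter_summable[OF nu, of 0] by (simp add: suminf_mult)
  finally show ?thesis .
qed

lemma deriv_upper:
  fixes f :: "real \<Rightarrow> real" and a y :: real
  assumes cont: "continuous_on {a<..} f"
    and int: "\<And>Y. Y > a \<Longrightarrow> interval_lebesgue_integrable lborel (ereal a) (ereal Y) f"
    and y: "y > a"
  shows "((\<lambda>Y. LBINT t=ereal a..ereal Y. f t) has_real_derivative f y) (at y)"
proof -
  define a' where "a' = (a + y) / 2"
  have a': "a < a'" "a' < y" using y unfolding a'_def by auto
  have eq: "(LBINT t=ereal a..ereal a'. f t) + (LBINT t=ereal a'..ereal Y. f t) = (LBINT t=ereal a..ereal Y. f t)"
    if "Y \<in> {a'<..}" for Y
  proof (rule interval_integral_sum)
    have "min (ereal a) (min (ereal a') (ereal Y)) = ereal a" "max (ereal a) (max (ereal a') (ereal Y)) = ereal Y"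
      using that a' by (auto simp: min_def max_def)
    then show "interval_lebesgue_integrable lborel (min (ereal a) (min (ereal a') (ereal Y))) (max (ereal a) (max (ereal a') (ereal Y))) f"
      using int[of Y] that a' by simp
  qed
  have "((\<lambda>u. LBINT t=a'..u. f t) has_vector_derivative f y) (at y within {a'..y+1})"
    by (rule interval_integral_FTC2) (use a' in \<open>auto intro: continuous_on_subset[OF cont]\<close>)
  then have "((\<lambda>u. LBINT t=a'..u. f t) has_vector_derivative f y) (at y)"
    using at_within_Icc_at[of a' y "y+1"] a' by simp
  then have d: "((\<lambda>u. LBINT t=a'..u. f t) has_real_derivative f y) (at y)"
    by (simp add: has_real_derivative_iff_has_vector_derivative)
  have "((\<lambda>Y. (LBINT t=ereal a..ereal a'. f t) + (LBINT t=ereal a'..ereal Y. f t)) has_real_derivative f y) (at y)"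
    using d by (auto intro!: derivative_eq_intros)
  then show ?thesis
    by (rule has_field_derivative_transform_within_open[where S="{a'<..}"]) (use a' eq in auto)
qed

lemma deriv_lower_inf:
  fixes f :: "real \<Rightarrow> real" and a y :: real
  assumes cont: "continuous_on {a<..} f"
    and int: "set_integrable lborel {a<..} f"
    and y: "y > a"
  shows "((\<lambda>Y. LBINT t=ereal Y..\<infinity>. f t) has_real_derivative - f y) (at y)"
proof -
  have intY: "interval_lebesgue_integrable lborel (ereal a) (ereal Y) f" if "Y > a" for Y
    unfolding interval_lebesgue_integrable_def using that
    by (auto intro!: set_integrable_subset[OF int] simp: einterval_iff)
  have eq: "(LBINT t=ereal a..\<infinity>. f t) - (LBINT t=ereal a..ereal Y. f t) = (LBINT t=ereal Y..\<infinity>. f t)"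
    if "Y \<in> {a<..}" for Y
  proof -
    have "(LBINT t=ereal a..ereal Y. f t) + (LBINT t=ereal Y..\<infinity>. f t) = (LBINT t=ereal a..\<infinity>. f t)"
    proof (rule interval_integral_sum)
      have "min (ereal a) (min (ereal Y) \<infinity>) = ereal a" "max (ereal a) (max (ereal Y) \<infinity>) = \<infinity>"
        using that by (auto simp: min_def max_def)
      then show "interval_lebesgue_integrable lborel (min (ereal a) (min (ereal Y) \<infinity>)) (max (ereal a) (max (ereal Y) \<infinity>)) f"
        using int by (simp add: interval_integrable_to_infinity_eq)
    qed
    then show ?thesis by simp
  qed
  have "((\<lambda>Y. (LBINT t=ereal a..\<infinity>. f t) - (LBINT t=ereal a..ereal Y. f t)) has_real_derivative 0 - f y) (at y)"
    by (intro derivative_intros deriv_upper[OF cont intY y]) auto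
  then have "((\<lambda>Y. (LBINT t=ereal a..\<infinity>. f t) - (LBINT t=ereal a..ereal Y. f t)) has_real_derivative - f y) (at y)"
    by simp
  then show ?thesis
    by (rule has_field_derivative_transform_within_open[where S="{a<..}"]) (use y eq in auto)
qed

lemma powr_int0:
  fixes a c :: real
  assumes a: "a > -1" and c: "c \<ge> 0"
  shows "set_integrable lborel {0<..c} (\<lambda>x. x powr a)"
proof -
  have "(\<lambda>x. x powr a) absolutely_integrable_on {0<..c}"
    using a c by (intro nonnegative_absolutely_integrable_1 integrable_on_powr_from_0') auto
  then have "integrable lebesgue (\<lambda>x. indicator {0<..c} x *\<^sub>R x powr a)"
    unfolding set_integrable_def .
  moreover have "(\<lambda>x. indicator {0<..c} x *\<^sub>R x powr a) \<in> borel_measurable lborel"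
    using sbm_cont_on[of "{0<..c}" "\<lambda>x. x powr a"]
    unfolding set_borel_measurable_def by (auto intro!: continuous_intros)
  ultimately show ?thesis
    unfolding set_integrable_def by (simp add: integrable_completion)
qed

lemma powr_exp_bound:
  fixes a t \<nu> \<epsilon> :: real
  assumes a: "0 < a" "a \<le> t" and e: "0 < \<epsilon>"
  shows "t powr \<nu> \<le> a powr \<nu> + exp (- \<nu> * (1 + ln \<epsilon>)) * exp (\<nu> * \<epsilon> * t)"
proof (cases "\<nu> \<ge> 0")
  case True
  have t: "t > 0" using a by auto
  have "ln (\<epsilon> * t) \<le> \<epsilon> * t - 1" using ln_le_minus_one[of "\<epsilon> * t"] e t by simp
  then have "ln t \<le> \<epsilon> * t - 1 - ln \<epsilon>" using e t by (simp add: ln_mult)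
  then have "\<nu> * ln t \<le> \<nu> * (\<epsilon> * t - 1 - ln \<epsilon>)" using True by (intro mult_left_mono) auto
  then have "t powr \<nu> \<le> exp (- \<nu> * (1 + ln \<epsilon>) + \<nu> * \<epsilon> * t)"
    using t by (simp add: powr_def algebra_simps)
  moreover have "exp (- \<nu> * (1 + ln \<epsilon>) + \<nu> * \<epsilon> * t) = exp (- \<nu> * (1 + ln \<epsilon>)) * exp (\<nu> * \<epsilon> * t)"
    by (simp only: exp_add)
  moreover have "0 \<le> a powr \<nu>" by simp
  ultimately show ?thesis by linarith
next
  case False
  have "t powr \<nu> \<le> a powr \<nu>" using False a by (intro powr_mono2') auto
  then show ?thesis by (smt (verit) exp_gt_zero mult_pos_pos)
qed

lemma deriv3_mult:
  fixes k k1 k2 k3 p p1 p2 p3 :: "real \<Rightarrow> real"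
  assumes "(k has_real_derivative k1 x) (at x)" "(k1 has_real_derivative k2 x) (at x)" "(k2 has_real_derivative k3 x) (at x)"
    "(p has_real_derivative p1 x) (at x)" "(p1 has_real_derivative p2 x) (at x)" "(p2 has_real_derivative p3 x) (at x)"
  shows "((\<lambda>x. k x * p x) has_real_derivative k1 x * p x + k x * p1 x) (at x)"
    "((\<lambda>x. k1 x * p x + k x * p1 x) has_real_derivative k2 x * p x + 2 * k1 x * p1 x + k x * p2 x) (at x)"
    "((\<lambda>x. k2 x * p x + 2 * k1 x * p1 x + k x * p2 x) has_real_derivative
        k3 x * p x + 3 * k2 x * p1 x + 3 * k1 x * p2 x + k x * p3 x) (at x)"
  using assms by (auto intro!: derivative_eq_intros simp: algebra_simps)

lemma Sd_cont: assumes nu: "\<nu> > -1/2" shows "continuous_on UNIV (Sd \<nu> j)"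
  by (rule continuous_at_imp_continuous_on) (use Sd_deriv[OF nu] DERIV_isCont in blast)

lemma Kc_cont: "continuous_on {0<..} (Kc n \<nu>)"
  by (rule continuous_at_imp_continuous_on, rule ballI, rule DERIV_isCont, rule Kc_deriv) auto

lemma L_A:
  fixes \<nu> \<sigma> \<mu> Hb y :: real and H0 :: "real \<Rightarrow> real"
  assumes nu: "\<nu> > -1/2" and s: "\<sigma> > 0" and Hc: "continuous_on UNIV H0"
    and Hb: "\<And>t. \<bar>H0 t\<bar> \<le> Hb" and y: "y > 0"
  shows "((\<lambda>Y. LBINT t=0..ereal Y. \<bar>t\<bar> powr \<nu> * besselI \<nu> (\<bar>t\<bar> / \<sigma>) * H0 (t + \<mu>))
           has_real_derivative (\<bar>y\<bar> powr \<nu> * besselI \<nu> (\<bar>y\<bar> / \<sigma>) * H0 (y + \<mu>))) (at y)"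
proof -
  define \<phi> where "\<phi> t = \<bar>t\<bar> powr \<nu> * besselI \<nu> (\<bar>t\<bar> / \<sigma>) * H0 (t + \<mu>)" for t
  define \<phi>' where "\<phi>' t = t powr \<nu> * ((t / \<sigma> / 2) powr \<nu> * Sd \<nu> 0 ((t / \<sigma> / 2)\<^sup>2)) * H0 (t + \<mu>)" for t
  have eq: "\<phi> t = \<phi>' t" if "t > 0" for t
    using besselI_repr[OF nu, of "t / \<sigma>"] s that by (simp add: \<phi>_def \<phi>'_def)
  have c': "continuous_on {0<..} \<phi>'" unfolding \<phi>'_def
    by (intro continuous_intros continuous_on_compose2[OF Sd_cont[OF nu]] continuous_on_compose2[OF Hc])
       (use s in auto)
  have c: "continuous_on {0<..} \<phi>" by (rule continuous_on_eq[OF c']) (use eq in auto)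
  have Hb0: "Hb \<ge> 0" using Hb[of 0] by linarith
  have int: "interval_lebesgue_integrable lborel (ereal 0) (ereal Y) \<phi>" if Y: "Y > 0" for Y
  proof -
    define C where "C = Sd \<nu> 0 ((Y / \<sigma> / 2)\<^sup>2) * Hb / (\<sigma> powr \<nu> * 2 powr \<nu>)"
    have C0: "C \<ge> 0" unfolding C_def using Sd_nonneg[OF nu] Hb0 by auto
    have ein: "einterval (ereal 0) (ereal Y) = {0<..<Y}" by (auto simp: einterval_iff)
    have "set_integrable lborel {0<..<Y} \<phi>"
    proof (rule set_integrable_bound)
      show "set_integrable lborel {0<..<Y} (\<lambda>t. C * t powr (2 * \<nu>))"
        using powr_int0[of "2 * \<nu>" Y] nu Y
        by (intro set_integrable_mult_right) (auto intro: set_integrable_subset)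
      show "set_borel_measurable lborel {0<..<Y} \<phi>"
        by (rule sbm_cont_on) (auto intro: continuous_on_subset[OF c])
      have "norm (\<phi> t) \<le> norm (C * t powr (2 * \<nu>))" if t: "t \<in> {0<..<Y}" for t
      proof -
        have t0: "t > 0" using t by auto
        have pw: "t powr \<nu> * (t / \<sigma> / 2) powr \<nu> = t powr (2 * \<nu>) / (\<sigma> powr \<nu> * 2 powr \<nu>)"
        proof -
          have p1: "(t / \<sigma> / 2) powr \<nu> = t powr \<nu> / \<sigma> powr \<nu> / 2 powr \<nu>" by (simp only: powr_divide)
          have p2: "t powr (2 * \<nu>) = t powr \<nu> * t powr \<nu>" by (simp only: mult_2 powr_add)
          have "\<sigma> powr \<nu> > 0" "(2::real) powr \<nu> > 0" using s by auto
          then show ?thesis unfolding p1 p2 by (simp add: field_simps)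
        qed
        have S1: "0 \<le> Sd \<nu> 0 ((t / \<sigma> / 2)\<^sup>2)" using Sd_nonneg[OF nu] by simp
        have S2: "Sd \<nu> 0 ((t / \<sigma> / 2)\<^sup>2) \<le> Sd \<nu> 0 ((Y / \<sigma> / 2)\<^sup>2)"
          using t s by (intro Sd_mono[OF nu] power_mono divide_right_mono) auto
        have "norm (\<phi> t) = t powr (2 * \<nu>) / (\<sigma> powr \<nu> * 2 powr \<nu>) * Sd \<nu> 0 ((t / \<sigma> / 2)\<^sup>2) * \<bar>H0 (t + \<mu>)\<bar>"
        proof -
          have "norm (\<phi> t) = (t powr \<nu> * (t / \<sigma> / 2) powr \<nu>) * Sd \<nu> 0 ((t / \<sigma> / 2)\<^sup>2) * \<bar>H0 (t + \<mu>)\<bar>"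
            unfolding eq[OF t0] \<phi>'_def real_norm_def abs_mult using S1
            by (simp add: abs_of_nonneg mult_ac)
          then show ?thesis by (simp only: pw)
        qed
        also have "\<dots> \<le> t powr (2 * \<nu>) / (\<sigma> powr \<nu> * 2 powr \<nu>) * Sd \<nu> 0 ((Y / \<sigma> / 2)\<^sup>2) * Hb"
          using S1 S2 Hb[of "t + \<mu>"] by (intro mult_mono) auto
        also have "\<dots> = norm (C * t powr (2 * \<nu>))" unfolding C_def using Hb0 Sd_nonneg[OF nu] by (simp add: abs_mult)
        finally show ?thesis .
      qed
      then show "AE t in lborel. t \<in> {0<..<Y} \<longrightarrow> norm (\<phi> t) \<le> norm (C * t powr (2 * \<nu>))" by auto
    qed
    then show ?thesis unfolding interval_lebesgue_integrable_def ein using Y by simp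
  qed
  have "((\<lambda>Y. LBINT t=ereal 0..ereal Y. \<phi> t) has_real_derivative \<phi> y) (at y)"
    by (rule deriv_upper[OF _ int y]) (use c in auto)
  then show ?thesis unfolding \<phi>_def zero_ereal_def by simp
qed

lemma L_B:
  fixes \<nu> \<sigma> \<mu> Hb y y1 :: real and H0 :: "real \<Rightarrow> real"
  assumes nu: "\<nu> > -1/2" and s: "\<sigma> > 0" and Hc: "continuous_on UNIV H0"
    and Hb: "\<And>t. \<bar>H0 t\<bar> \<le> Hb" and y1: "y1 > 0" and y: "y > y1"
  shows "((\<lambda>Y. LBINT t=ereal Y..\<infinity>. \<bar>t\<bar> powr \<nu> * besselK \<nu> (\<bar>t\<bar> / \<sigma>) * H0 (t + \<mu>))
           has_real_derivative - (\<bar>y\<bar> powr \<nu> * besselK \<nu> (\<bar>y\<bar> / \<sigma>) * H0 (y + \<mu>))) (at y)"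
proof -
  define \<psi> where "\<psi> t = \<bar>t\<bar> powr \<nu> * besselK \<nu> (\<bar>t\<bar> / \<sigma>) * H0 (t + \<mu>)" for t
  define \<psi>' where "\<psi>' t = t powr \<nu> * Kc 0 \<nu> (t / \<sigma>) * H0 (t + \<mu>)" for t
  have eq: "\<psi> t = \<psi>' t" if "t > 0" for t
    using that by (simp add: \<psi>_def \<psi>'_def besselK_Kc)
  have c': "continuous_on {y1<..} \<psi>'" unfolding \<psi>'_def
    by (intro continuous_intros continuous_on_compose2[OF Kc_cont] continuous_on_compose2[OF Hc])
       (use s y1 in auto)
  have c: "continuous_on {y1<..} \<psi>" by (rule continuous_on_eq[OF c']) (use eq y1 in auto)
  have Hb0: "Hb \<ge> 0" using Hb[of 0] by linarith
  define x1 where "x1 = y1 / \<sigma>"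
  have x1: "x1 > 0" unfolding x1_def using y1 s by simp
  define \<epsilon> where "\<epsilon> = 1 / (2 * \<sigma> * (\<bar>\<nu>\<bar> + 1))"
  have e: "\<epsilon> > 0" unfolding \<epsilon>_def using s by simp
  have ne: "\<nu> * \<epsilon> \<le> 1 / (2 * \<sigma>)"
  proof -
    have "\<nu> * \<epsilon> \<le> \<bar>\<nu>\<bar> * \<epsilon>" using e by (intro mult_right_mono) auto
    also have "\<dots> \<le> (\<bar>\<nu>\<bar> + 1) * \<epsilon>" using e by (intro mult_right_mono) auto
    also have "\<dots> = 1 / (2 * \<sigma>)" unfolding \<epsilon>_def using s
      by (simp add: divide_simps)
    finally show ?thesis .
  qed
  define Ec where "Ec = exp (- \<nu> * (1 + ln \<epsilon>))"
  define K1 where "K1 = Kc 0 \<nu> x1"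
  have K1: "K1 \<ge> 0" unfolding K1_def using Kc_nonneg[OF x1] .
  define Co where "Co = Hb * exp x1 * K1"
  have Co: "Co \<ge> 0" unfolding Co_def using Hb0 K1 by simp
  have int: "set_integrable lborel {y1<..} \<psi>"
  proof (rule set_integrable_bound)
    show "set_integrable lborel {y1<..} (\<lambda>t. Co * (y1 powr \<nu> * exp (- (1/\<sigma>) * t) + Ec * exp (- (1/(2*\<sigma>)) * t)))"
      using exp_int[of "1/\<sigma>" y1] exp_int[of "1/(2*\<sigma>)" y1] s
      by (intro set_integrable_mult_right set_integral_add set_integrable_mult_right) auto
    show "set_borel_measurable lborel {y1<..} \<psi>" by (rule sbm_cont_on[OF c]) auto
    have "norm (\<psi> t) \<le> norm (Co * (y1 powr \<nu> * exp (- (1/\<sigma>) * t) + Ec * exp (- (1/(2*\<sigma>)) * t)))"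
      if t: "t \<in> {y1<..}" for t
    proof -
      have t0: "t > 0" using t y1 by auto
      have tx: "x1 \<le> t / \<sigma>" using t s unfolding x1_def by (simp add: divide_right_mono)
      have kd: "Kc 0 \<nu> (t / \<sigma>) \<le> exp x1 * K1 * exp (- (1/\<sigma>) * t)"
      proof -
        have "Kc 0 \<nu> (t / \<sigma>) \<le> exp (- (t / \<sigma> - x1)) * K1" unfolding K1_def by (rule Kc_decay[OF x1 tx])
        also have "exp (- (t / \<sigma> - x1)) = exp x1 * exp (- (1/\<sigma>) * t)" by (simp add: exp_add[symmetric])
        finally show ?thesis by (simp add: mult_ac)
      qed
      have pb: "t powr \<nu> \<le> y1 powr \<nu> + Ec * exp (\<nu> * \<epsilon> * t)"
        unfolding Ec_def using powr_exp_bound[OF y1 _ e, of t \<nu>] t by simp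
      have kn: "0 \<le> Kc 0 \<nu> (t / \<sigma>)" using Kc_nonneg t0 s by simp
      have "norm (\<psi> t) = t powr \<nu> * Kc 0 \<nu> (t / \<sigma>) * \<bar>H0 (t + \<mu>)\<bar>"
        unfolding eq[OF t0] \<psi>'_def real_norm_def abs_mult using kn by (simp add: abs_of_nonneg)
      also have "\<dots> \<le> (y1 powr \<nu> + Ec * exp (\<nu> * \<epsilon> * t)) * (exp x1 * K1 * exp (- (1/\<sigma>) * t)) * Hb"
        using pb kd kn Hb[of "t + \<mu>"] by (intro mult_mono) (auto simp: Ec_def)
      also have "\<dots> = Co * (y1 powr \<nu> * exp (- (1/\<sigma>) * t) + Ec * (exp (\<nu> * \<epsilon> * t) * exp (- (1/\<sigma>) * t)))"
        unfolding Co_def by (simp add: algebra_simps)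
      also have "\<dots> \<le> Co * (y1 powr \<nu> * exp (- (1/\<sigma>) * t) + Ec * exp (- (1/(2*\<sigma>)) * t))"
      proof -
        have "\<nu> * \<epsilon> * t \<le> 1 / (2 * \<sigma>) * t" using ne t0 by (intro mult_right_mono) auto
        then have "\<nu> * \<epsilon> * t + - (1/\<sigma>) * t \<le> - (1/(2*\<sigma>)) * t" using s by (simp add: field_simps)
        then have "exp (\<nu> * \<epsilon> * t) * exp (- (1/\<sigma>) * t) \<le> exp (- (1/(2*\<sigma>)) * t)"
          by (simp only: exp_add[symmetric] exp_le_cancel_iff)
        then show ?thesis using Co by (intro mult_left_mono add_left_mono) (auto simp: Ec_def)
      qed
      also have "\<dots> \<le> norm (Co * (y1 powr \<nu> * exp (- (1/\<sigma>) * t) + Ec * exp (- (1/(2*\<sigma>)) * t)))"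
        by simp
      finally show ?thesis .
    qed
    then show "AE t in lborel. t \<in> {y1<..} \<longrightarrow> norm (\<psi> t) \<le> norm (Co * (y1 powr \<nu> * exp (- (1/\<sigma>) * t) + Ec * exp (- (1/(2*\<sigma>)) * t)))"
      by auto
  qed
  have "((\<lambda>Y. LBINT t=ereal Y..\<infinity>. \<psi> t) has_real_derivative - \<psi> y) (at y)"
    by (rule deriv_lower_inf[OF c int y])
  then show ?thesis unfolding \<psi>_def by simp
qed

lemma Kc_comp_deriv:
  fixes \<sigma> \<mu> x :: real
  assumes s: "\<sigma> > 0" and x: "x > \<mu>"
  shows "((\<lambda>x. Kc j \<nu> ((x - \<mu>) / \<sigma>)) has_real_derivative - Kc (Suc j) \<nu> ((x - \<mu>) / \<sigma>) / \<sigma>) (at x)"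
proof -
  have i: "((\<lambda>x. (x - \<mu>) / \<sigma>) has_real_derivative 1 / \<sigma>) (at x)" using s by (auto intro!: derivative_eq_intros)
  have "(x - \<mu>) / \<sigma> > 0" using s x by simp
  from DERIV_chain2[OF Kc_deriv[OF this] i] show ?thesis by simp
qed

lemma powr_comp_deriv:
  fixes \<mu> x a :: real
  assumes x: "x > \<mu>"
  shows "((\<lambda>x. (x - \<mu>) powr a) has_real_derivative a * (x - \<mu>) powr (a - 1)) (at x)"
proof -
  have i: "((\<lambda>x. x - \<mu>) has_real_derivative 1) (at x)" by (auto intro!: derivative_eq_intros)
  have "x - \<mu> > 0" using x by simp
  from DERIV_chain2[OF has_real_derivative_powr[OF this] i] show ?thesis by simp
qed

lemma hlip:
  fixes x0 :: real
  shows "1-lipschitz_on UNIV (\<lambda>x. max 0 (1 - \<bar>x - x0\<bar>))"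
  by (rule lipschitz_onI) (auto simp: dist_real_def max_def abs_if)

lemma lip_le:
  assumes "1-lipschitz_on UNIV h"
  shows "lip_const h \<le> 1" "0 \<le> lip_const h"
proof -
  have bdd: "bdd_below {L. L-lipschitz_on UNIV h}"
    by (rule bdd_belowI[of _ 0]) (auto simp: lipschitz_on_def)
  show "lip_const h \<le> 1" unfolding lip_const_def by (rule cInf_lower) (use assms bdd in auto)
  show "0 \<le> lip_const h" unfolding lip_const_def
  proof (rule cInf_greatest)
    show "{L. L-lipschitz_on UNIV h} \<noteq> {}" using assms by blast
  qed (auto simp: lipschitz_on_def)
qed

theorem proposition3p6:
  fixes r \<sigma> \<mu> :: real
  assumes "r > 0" and "\<sigma> > 0"
  shows "\<not> (\<exists>M > 0. \<forall>h :: real \<Rightarrow> real. (\<exists>L. L-lipschitz_on UNIV h) \<longrightarrow>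
            (\<forall>x D. third_deriv_at (svg_stein_sol r \<sigma> \<mu> h) x D \<longrightarrow> \<bar>D\<bar> \<le> M * lip_const h))"
proof
  assume "\<exists>M > 0. \<forall>h :: real \<Rightarrow> real. (\<exists>L. L-lipschitz_on UNIV h) \<longrightarrow>
            (\<forall>x D. third_deriv_at (svg_stein_sol r \<sigma> \<mu> h) x D \<longrightarrow> \<bar>D\<bar> \<le> M * lip_const h)"
  then obtain M where M: "M > 0" and HM: "\<And>h x D. (\<exists>L. L-lipschitz_on UNIV h) \<Longrightarrow>
      third_deriv_at (svg_stein_sol r \<sigma> \<mu> h) x D \<Longrightarrow> \<bar>D\<bar> \<le> M * lip_const h" by blast
  have s: "\<sigma> > 0" by fact
  define \<nu> where "\<nu> = (r - 1) / 2"
  have nu: "\<nu> > -1/2" using assms unfolding \<nu>_def by simp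
  obtain \<zeta> where \<zeta>: "\<zeta> > 0" and \<zeta>b: "\<zeta> powr \<nu> * Kc 0 (\<nu> + 1) \<zeta> > M * \<sigma> ^ 3 * 2 powr \<nu> * Gamma (\<nu> + 1)"
    using Kc_lower[OF nu] by blast
  define x0 where "x0 = \<mu> + \<sigma> * \<zeta>"
  define h where "h x = max 0 (1 - \<bar>x - x0\<bar>)" for x
  have hl: "1-lipschitz_on UNIV h" unfolding h_def[abs_def] by (rule hlip)
  define E where "E = svg_expect r \<sigma> \<mu> h"
  define H where "H x = h x - E" for x
  have Hc: "continuous_on UNIV H" unfolding H_def h_def by (intro continuous_intros)
  have Hb: "\<bar>H t\<bar> \<le> 1 + \<bar>E\<bar>" for t unfolding H_def h_def by auto
  define y1 where "y1 = \<sigma> * \<zeta> / 2"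
  have y1: "y1 > 0" unfolding y1_def using s \<zeta> by simp
  define \<rho> where "\<rho> = min 1 y1"
  have rho: "\<rho> > 0" unfolding \<rho>_def using y1 by simp
  have inJ: "x - \<mu> > y1" if "x \<in> ball x0 \<rho>" for x
  proof -
    have "dist x0 x < y1" using that unfolding \<rho>_def by auto
    then have "x0 - x < y1" unfolding dist_real_def by linarith
    then show ?thesis unfolding x0_def y1_def by linarith
  qed
  define k where "k x = Kc 0 \<nu> ((x - \<mu>) / \<sigma>)" for x
  define k1 where "k1 x = - Kc 1 \<nu> ((x - \<mu>) / \<sigma>) / \<sigma>" for x
  define k2 where "k2 x = - (- Kc 2 \<nu> ((x - \<mu>) / \<sigma>) / \<sigma>) / \<sigma>" for x
  define k3 where "k3 x = - (- (- Kc 3 \<nu> ((x - \<mu>) / \<sigma>) / \<sigma>) / \<sigma>) / \<sigma>" for x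
  define p where "p x = (x - \<mu>) powr (- \<nu>) / \<sigma>\<^sup>2" for x
  define p1 where "p1 x = (- \<nu>) * (x - \<mu>) powr (- \<nu> - 1) / \<sigma>\<^sup>2" for x
  define p2 where "p2 x = (- \<nu>) * ((- \<nu> - 1) * (x - \<mu>) powr (- \<nu> - 1 - 1)) / \<sigma>\<^sup>2" for x
  define p3 where "p3 x = (- \<nu>) * ((- \<nu> - 1) * ((- \<nu> - 1 - 1) * (x - \<mu>) powr (- \<nu> - 1 - 1 - 1))) / \<sigma>\<^sup>2" for x
  define u where "u x = k x * p x" for x
  define u1 where "u1 x = k1 x * p x + k x * p1 x" for x
  define u2 where "u2 x = k2 x * p x + 2 * k1 x * p1 x + k x * p2 x" for x
  define u3 where "u3 x = k3 x * p x + 3 * k2 x * p1 x + 3 * k1 x * p2 x + k x * p3 x" for x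
  define cv where "cv = inverse (\<sigma> powr \<nu> * 2 powr \<nu> * \<sigma>\<^sup>2)"
  define q where "q x = ((x - \<mu>) / \<sigma> / 2)\<^sup>2" for x
  define q1 where "q1 x = (x - \<mu>) / (2 * \<sigma>\<^sup>2)" for x
  define q2 where "q2 = 1 / (2 * \<sigma>\<^sup>2)"
  define v where "v x = cv * Sd \<nu> 0 (q x)" for x
  define v1 where "v1 x = cv * (Sd \<nu> 1 (q x) * q1 x)" for x
  define v2 where "v2 x = cv * (Sd \<nu> 2 (q x) * q1 x * q1 x + Sd \<nu> 1 (q x) * q2)" for x
  define v3 where "v3 x = cv * (Sd \<nu> 3 (q x) * q1 x * q1 x * q1 x + 3 * (Sd \<nu> 2 (q x) * q1 x * q2))" for x
  define w where "w x = \<sigma>\<^sup>2 * (x - \<mu>) powr (2 * \<nu>)" for x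
  define w1 where "w1 x = \<sigma>\<^sup>2 * (2 * \<nu> * (x - \<mu>) powr (2 * \<nu> - 1))" for x
  define A where "A x = (LBINT t=0..ereal (x - \<mu>). \<bar>t\<bar> powr \<nu> * besselI \<nu> (\<bar>t\<bar> / \<sigma>) * H (t + \<mu>))" for x
  define B where "B x = (LBINT t=ereal (x - \<mu>)..\<infinity>. \<bar>t\<bar> powr \<nu> * besselK \<nu> (\<bar>t\<bar> / \<sigma>) * H (t + \<mu>))" for x
  define F where "F = svg_stein_sol r \<sigma> \<mu> h"
  have FJ: "F x = - u x * A x - v x * B x" if "x \<in> ball x0 \<rho>" for x
  proof -
    have xm: "x - \<mu> > 0" using inJ[OF that] y1 by simp
    have ay: "\<bar>x - \<mu>\<bar> = x - \<mu>" using xm by simp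
    have xne: "x \<noteq> \<mu>" using xm by simp
    have F1: "F x = - (besselK \<nu> ((x - \<mu>) / \<sigma>) / (\<sigma>\<^sup>2 * (x - \<mu>) powr \<nu>)) * A x
        - besselI \<nu> ((x - \<mu>) / \<sigma>) / (\<sigma>\<^sup>2 * (x - \<mu>) powr \<nu>) * B x"
      unfolding F_def svg_stein_sol_def svg_stein_formula_def Let_def A_def B_def H_def E_def \<nu>_def
      using xne ay by simp
    have pos: "\<sigma> powr \<nu> > 0" "(2::real) powr \<nu> > 0" "(x - \<mu>) powr \<nu> > 0" using s xm by auto
    have p1: "((x - \<mu>) / \<sigma> / 2) powr \<nu> = (x - \<mu>) powr \<nu> / \<sigma> powr \<nu> / 2 powr \<nu>" by (simp only: powr_divide)
    have eu: "besselK \<nu> ((x - \<mu>) / \<sigma>) / (\<sigma>\<^sup>2 * (x - \<mu>) powr \<nu>) = u x"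
      unfolding u_def k_def p_def powr_minus besselK_Kc using pos by (simp add: field_simps)
    have ev: "besselI \<nu> ((x - \<mu>) / \<sigma>) / (\<sigma>\<^sup>2 * (x - \<mu>) powr \<nu>) = v x"
      using besselI_repr[OF nu, of "(x - \<mu>) / \<sigma>"] s xm pos
      unfolding v_def cv_def q_def p1 by (simp add: field_simps)
    show ?thesis unfolding F1 eu ev by simp
  qed
  have dk: "(k has_real_derivative k1 x) (at x)" "(k1 has_real_derivative k2 x) (at x)" "(k2 has_real_derivative k3 x) (at x)"
    if "x \<in> ball x0 \<rho>" for x
  proof -
    have xm: "x > \<mu>" using inJ[OF that] y1 by simp
    show "(k has_real_derivative k1 x) (at x)"
      using Kc_comp_deriv[OF s xm, of 0 \<nu>] unfolding k_def[abs_def] k1_def by simp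
    show "(k1 has_real_derivative k2 x) (at x)"
      using DERIV_cdivide[OF DERIV_minus[OF Kc_comp_deriv[OF s xm, of 1 \<nu>]], of \<sigma>]
      unfolding k1_def[abs_def] k2_def by (simp add: numeral_2_eq_2)
    show "(k2 has_real_derivative k3 x) (at x)"
      using DERIV_cdivide[OF DERIV_minus[OF DERIV_cdivide[OF DERIV_minus[OF Kc_comp_deriv[OF s xm, of 2 \<nu>]], of \<sigma>]], of \<sigma>]
      unfolding k2_def[abs_def] k3_def by (simp add: numeral_3_eq_3 numeral_2_eq_2)
  qed
  have dp: "(p has_real_derivative p1 x) (at x)" "(p1 has_real_derivative p2 x) (at x)" "(p2 has_real_derivative p3 x) (at x)"
    if "x \<in> ball x0 \<rho>" for x
  proof -
    have xm: "x > \<mu>" using inJ[OF that] y1 by simp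
    show "(p has_real_derivative p1 x) (at x)"
      using DERIV_cdivide[OF powr_comp_deriv[OF xm, of "- \<nu>"], of "\<sigma>\<^sup>2"]
      unfolding p_def[abs_def] p1_def by simp
    show "(p1 has_real_derivative p2 x) (at x)"
      using DERIV_cdivide[OF DERIV_cmult[OF powr_comp_deriv[OF xm, of "- \<nu> - 1"], of "- \<nu>"], of "\<sigma>\<^sup>2"]
      unfolding p1_def[abs_def] p2_def by simp
    show "(p2 has_real_derivative p3 x) (at x)"
      using DERIV_cdivide[OF DERIV_cmult[OF DERIV_cmult[OF powr_comp_deriv[OF xm, of "- \<nu> - 1 - 1"], of "- \<nu> - 1"], of "- \<nu>"], of "\<sigma>\<^sup>2"]
      unfolding p2_def[abs_def] p3_def by (simp add: mult.assoc)
  qed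
  have du: "(u has_real_derivative u1 x) (at x)" "(u1 has_real_derivative u2 x) (at x)" "(u2 has_real_derivative u3 x) (at x)"
    if "x \<in> ball x0 \<rho>" for x
    using deriv3_mult[of k k1 x k2 k3 p p1 p2 p3, OF dk[OF that] dp[OF that]] unfolding u_def[abs_def] u1_def[abs_def] u2_def[abs_def] u3_def
    by auto
  have dv: "(v has_real_derivative v1 x) (at x)" "(v1 has_real_derivative v2 x) (at x)" "(v2 has_real_derivative v3 x) (at x)"
    for x
  proof -
    have dq: "(q has_real_derivative q1 y) (at y)" for y
      unfolding q_def[abs_def] q1_def using s
      by (auto intro!: derivative_eq_intros simp: field_simps power2_eq_square)
    have dq1: "(q1 has_real_derivative q2) (at y)" for y
      unfolding q1_def[abs_def] q2_def using s
      by (auto intro!: derivative_eq_intros simp: field_simps power2_eq_square)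
    have dS: "((\<lambda>x. Sd \<nu> j (q x)) has_real_derivative Sd \<nu> (Suc j) (q y) * q1 y) (at y)" for j y
      by (rule DERIV_chain2[OF Sd_deriv[OF nu] dq])
    show "(v has_real_derivative v1 x) (at x)"
      using DERIV_cmult[OF dS[of 0 x], of cv] unfolding v_def[abs_def] v1_def by simp
    show "(v1 has_real_derivative v2 x) (at x)"
      using DERIV_cmult[OF DERIV_mult[OF dS[of 1 x] dq1[of x]], of cv] unfolding v1_def[abs_def] v2_def
      by (simp add: numeral_2_eq_2 algebra_simps)
    have "((\<lambda>x. Sd \<nu> 2 (q x) * q1 x * q1 x + Sd \<nu> 1 (q x) * q2) has_real_derivative
        (Sd \<nu> (Suc 2) (q x) * q1 x * q1 x + q2 * Sd \<nu> 2 (q x)) * q1 x + q2 * (Sd \<nu> 2 (q x) * q1 x)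
         + ((Sd \<nu> (Suc 1) (q x) * q1 x) * q2 + 0 * Sd \<nu> 1 (q x))) (at x)"
      by (intro DERIV_add DERIV_mult dS dq1 DERIV_const)
    from DERIV_cmult[OF this, of cv] show "(v2 has_real_derivative v3 x) (at x)"
      unfolding v2_def[abs_def] v3_def
      by (rule DERIV_cong) (simp add: numeral_2_eq_2 numeral_3_eq_3 algebra_simps)
  qed
  have dw: "(w has_real_derivative w1 x) (at x)" if "x \<in> ball x0 \<rho>" for x
  proof -
    have xm: "x > \<mu>" using inJ[OF that] y1 by simp
    show ?thesis using DERIV_cmult[OF powr_comp_deriv[OF xm, of "2 * \<nu>"], of "\<sigma>\<^sup>2"]
      unfolding w_def[abs_def] w1_def by simp
  qed
  have pw2: "y powr (2 * \<nu>) = y powr \<nu> * y powr \<nu>" for y :: real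
    by (simp only: mult_2 powr_add)
  have dA: "(A has_real_derivative w x * v x * H x) (at x)" if "x \<in> ball x0 \<rho>" for x
  proof -
    have xm: "x - \<mu> > 0" using inJ[OF that] y1 by simp
    have i: "((\<lambda>x. x - \<mu>) has_real_derivative 1) (at x)" by (auto intro!: derivative_eq_intros)
    from DERIV_chain2[OF L_A[OF nu s Hc Hb xm, of \<mu>] i]
    have d: "(A has_real_derivative \<bar>x - \<mu>\<bar> powr \<nu> * besselI \<nu> (\<bar>x - \<mu>\<bar> / \<sigma>) * H (x - \<mu> + \<mu>) * 1) (at x)"
      unfolding A_def[abs_def] by simp
    have p1: "((x - \<mu>) / \<sigma> / 2) powr \<nu> = (x - \<mu>) powr \<nu> / \<sigma> powr \<nu> / 2 powr \<nu>" by (simp only: powr_divide)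
    have pos: "\<sigma> powr \<nu> > 0" "(2::real) powr \<nu> > 0" "(x - \<mu>) powr \<nu> > 0" using s xm by auto
    have eqv: "\<bar>x - \<mu>\<bar> powr \<nu> * besselI \<nu> (\<bar>x - \<mu>\<bar> / \<sigma>) * H (x - \<mu> + \<mu>) * 1 = w x * v x * H x"
      using xm besselI_repr[OF nu, of "(x - \<mu>) / \<sigma>"] s pos
      unfolding w_def v_def cv_def q_def pw2 p1 by (simp add: field_simps)
    from d show ?thesis unfolding eqv .
  qed
  have dB: "(B has_real_derivative - (w x * u x * H x)) (at x)" if "x \<in> ball x0 \<rho>" for x
  proof -
    have xm: "x - \<mu> > y1" using inJ[OF that] by simp
    have xm0: "x - \<mu> > 0" using xm y1 by simp
    have i: "((\<lambda>x. x - \<mu>) has_real_derivative 1) (at x)" by (auto intro!: derivative_eq_intros)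
    from DERIV_chain2[OF L_B[OF nu s Hc Hb y1 xm, of \<mu>] i]
    have d: "(B has_real_derivative - (\<bar>x - \<mu>\<bar> powr \<nu> * besselK \<nu> (\<bar>x - \<mu>\<bar> / \<sigma>) * H (x - \<mu> + \<mu>)) * 1) (at x)"
      unfolding B_def[abs_def] by simp
    have pos: "(x - \<mu>) powr \<nu> > 0" using xm0 by auto
    have eqv: "- (\<bar>x - \<mu>\<bar> powr \<nu> * besselK \<nu> (\<bar>x - \<mu>\<bar> / \<sigma>) * H (x - \<mu> + \<mu>)) * 1 = - (w x * u x * H x)"
      using xm0 s pos unfolding w_def u_def k_def p_def pw2 powr_minus besselK_Kc by (simp add: field_simps)
    from d show ?thesis unfolding eqv .
  qed
  have HJ: "H x = (1 - E) - \<bar>x - x0\<bar>" if "x \<in> ball x0 \<rho>" for x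
  proof -
    have "\<bar>x - x0\<bar> < 1" using that unfolding \<rho>_def by (auto simp: dist_real_def)
    then show ?thesis unfolding H_def h_def by simp
  qed
  have g: "w x0 * (v1 x0 * u x0 - u1 x0 * v x0) > M"
  proof -
    have y0: "x0 - \<mu> = \<sigma> * \<zeta>" unfolding x0_def by simp
    have z0: "(x0 - \<mu>) / \<sigma> = \<zeta>" using s unfolding y0 by simp
    have sz: "\<sigma> * \<zeta> > 0" using s \<zeta> by simp
    define Y where "Y = (\<sigma> * \<zeta>) powr \<nu>"
    have Y: "Y > 0" unfolding Y_def using s \<zeta> by simp
    have YY: "Y = \<sigma> powr \<nu> * \<zeta> powr \<nu>" unfolding Y_def by (simp add: powr_mult)
    define K0 where "K0 = Kc 0 \<nu> \<zeta>"
    define K1 where "K1 = Kc 1 \<nu> \<zeta>"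
    define K' where "K' = Kc 0 (\<nu> + 1) \<zeta>"
    have ibp: "\<nu> * K0 + \<zeta> * K1 = \<zeta> * K'" unfolding K0_def K1_def K'_def by (rule Kc_ibp[OF \<zeta>])
    have K0n: "K0 \<ge> 0" unfolding K0_def using Kc_nonneg[OF \<zeta>] .
    have K'n: "K' \<ge> 0" unfolding K'_def using Kc_nonneg[OF \<zeta>] .
    define S0 where "S0 = Sd \<nu> 0 (q x0)"
    have S0: "S0 \<ge> inverse (Gamma (\<nu> + 1))" unfolding S0_def q_def by (rule Sd0_lower[OF nu]) simp
    have G: "Gamma (\<nu> + 1) > 0" using nu by simp
    have cv: "cv > 0" unfolding cv_def using s by simp
    have eu: "u x0 = K0 / (\<sigma>\<^sup>2 * Y)"
      unfolding u_def k_def p_def z0 y0 K0_def Y_def powr_minus by (simp add: field_simps)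
    have pm: "(\<sigma> * \<zeta>) powr (- \<nu> - 1) = inverse Y / (\<sigma> * \<zeta>)"
      unfolding Y_def using sz by (simp add: powr_diff powr_minus)
    have eu1: "u1 x0 = - (\<zeta> * K1 + \<nu> * K0) / (\<sigma> ^ 3 * Y * \<zeta>)"
      unfolding u1_def k_def k1_def p_def p1_def z0 y0 K0_def K1_def pm
      unfolding Y_def[symmetric] powr_minus using s \<zeta> Y by (simp add: field_simps power2_eq_square power3_eq_cube)
    then have eu1': "u1 x0 = - K' / (\<sigma> ^ 3 * Y)" using ibp \<zeta> by (simp add: add.commute)
    have ew: "w x0 = \<sigma>\<^sup>2 * (Y * Y)" unfolding w_def y0 pw2 Y_def by simp
    have ev: "v x0 = cv * S0" unfolding v_def S0_def ..
    have v1n: "v1 x0 \<ge> 0" unfolding v1_def q1_def y0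
      using cv Sd_nonneg[OF nu, of "q x0" 1] sz s by (simp add: q_def)
    have un: "u x0 \<ge> 0" unfolding eu using K0n Y by simp
    have "w x0 * (v1 x0 * u x0 - u1 x0 * v x0) \<ge> w x0 * (- u1 x0 * v x0)"
      using v1n un ew Y by (intro mult_left_mono) auto
    also have "w x0 * (- u1 x0 * v x0) = Y * K' * cv * S0 / \<sigma>"
      unfolding ew eu1' ev using s Y by (simp add: field_simps power2_eq_square power3_eq_cube)
    also have "Y * K' * cv * S0 / \<sigma> = \<zeta> powr \<nu> * K' * S0 / (2 powr \<nu> * \<sigma> ^ 3)"
      unfolding YY cv_def using s by (simp add: field_simps power2_eq_square power3_eq_cube)
    finally have g1: "w x0 * (v1 x0 * u x0 - u1 x0 * v x0) \<ge> \<zeta> powr \<nu> * K' * S0 / (2 powr \<nu> * \<sigma> ^ 3)" .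
    have "\<zeta> powr \<nu> * K' * S0 / (2 powr \<nu> * \<sigma> ^ 3) \<ge> \<zeta> powr \<nu> * K' * inverse (Gamma (\<nu> + 1)) / (2 powr \<nu> * \<sigma> ^ 3)"
      using S0 K'n s by (intro divide_right_mono mult_left_mono) auto
    moreover have "\<zeta> powr \<nu> * K' * inverse (Gamma (\<nu> + 1)) / (2 powr \<nu> * \<sigma> ^ 3) > M"
    proof -
      have "M * \<sigma> ^ 3 * 2 powr \<nu> * Gamma (\<nu> + 1) < \<zeta> powr \<nu> * K'" using \<zeta>b unfolding K'_def .
      then show ?thesis using G s by (simp add: field_simps)
    qed
    ultimately show ?thesis using g1 by linarith
  qed
  obtain x D where xD: "third_deriv_at F x D" "\<bar>D\<bar> > M"
    using jump_lemma[OF rho FJ du dv dw dA dB HJ g] by blast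
  have "\<bar>D\<bar> \<le> M * lip_const h" using HM[of h x D] hl xD(1) unfolding F_def by blast
  also have "\<dots> \<le> M * 1" using lip_le[OF hl] M by (intro mult_left_mono) auto
  finally show False using xD(2) by simp
qed

end
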